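(* For every base $b\ge 2$ there exist infinitely many $b$-wARH numbers, and infinitely many distinct integers $A\ge 0$ that occur as additive extra terms of some $b$-wARH number.
   Context: Fix a base $b\ge 2$. $s_b(N)$ is the sum of the base-$b$ digits of $N$. For a positive integer $X$, its reversal $X^R$ is the integer whose base-$b$ representation is that of $X$ written in reverse order (leading zeros of the result are dropped). A positive integer $N$ is a $b$-wARH number if there exists an integer $A\ge 0$, called an additive extra term of $N$, such that $N=(A+s_b(N))+(A+s_b(N))^R$. *)

theory Defs
  imports Main
begin

fun digits :: "nat \<Rightarrow> nat \<Rightarrow> nat list" where
  "digits b n = (if b < 2 \<or> n = 0 then [] else n mod b # digits b (n div b))"

declare digits.simps[simp del]

fun from_digits :: "nat \<Rightarrow> nat list \<Rightarrow> nat" where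
  "from_digits b [] = 0"
| "from_digits b (d # ds) = d + b * from_digits b ds"

definition digit_sum :: "nat \<Rightarrow> nat \<Rightarrow> nat" where
  "digit_sum b n = sum_list (digits b n)"

(* reversal: read the digits in reverse order; leading zeros automatically dropped *)
definition rev_num :: "nat \<Rightarrow> nat \<Rightarrow> nat" where
  "rev_num b n = from_digits b (rev (digits b n))"

definition is_extra_term :: "nat \<Rightarrow> nat \<Rightarrow> nat \<Rightarrow> bool" where
  "is_extra_term b N A \<longleftrightarrow>
     N = (A + digit_sum b N) + rev_num b (A + digit_sum b N)"

definition wARH :: "nat \<Rightarrow> nat \<Rightarrow> bool" where
  "wARH b N \<longleftrightarrow> N > 0 \<and> (\<exists>A. is_extra_term b N A)"

end

theory Submission
  imports Defs
begin

lemma pge: "2 \<le> (b::nat) \<Longrightarrow> 2 \<le> b^Suc k" using power_increasing[of 1 "Suc k" b] by (simp del: power_Suc)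
lemma a1: "2 \<le> (b::nat) \<Longrightarrow> (b*m + 1) mod b = 1"
  using mod_mult_self2[of 1 b m] by (simp add: add.commute)
lemma a2: "2 \<le> (b::nat) \<Longrightarrow> (b*m + 1) div b = m"
  using div_mult_self2[of b 1 m] by (simp add: add.commute)

lemma digits_pow:
  assumes "b \<ge> 2" shows "digits b (b^k) = replicate k 0 @ [1]"
proof (induction k)
  case 0 then show ?case using assms by (simp add: digits.simps)
next
  case (Suc k)
  have "digits b (b^Suc k) = (b^Suc k) mod b # digits b (b^Suc k div b)"
    using assms by (subst digits.simps) simp
  also have "\<dots> = 0 # digits b (b^k)" using assms by simp
  finally show ?case using Suc by simp
qed

lemma from_digits_rep0: "from_digits b (replicate k 0 @ xs) = b^k * from_digits b xs"
  by (induction k) auto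

lemma rev_pow: assumes "b \<ge> 2" shows "rev_num b (b^k) = 1"
  using assms from_digits_rep0[of b k "[]"] by (simp add: rev_num_def digits_pow)

lemma ds_pow1: assumes "b \<ge> 2" shows "digit_sum b (b^Suc k + 1) = 2"
proof -
  have m: "(b^Suc k + 1) mod b = 1" using assms
    using a1[of b "b^k"] by simp
  have d: "(b^Suc k + 1) div b = b^k" using assms
    using a2[of b "b^k"] by simp
  have "digits b (b^Suc k + 1) = 1 # digits b (b^k)"
    using assms m d by (subst digits.simps) simp
  then show ?thesis using assms by (simp add: digit_sum_def digits_pow)
qed

lemma key: assumes "b \<ge> 2"
  shows "wARH b (b^Suc k + 1) \<and> is_extra_term b (b^Suc k + 1) (b^Suc k - 2)"
proof -
  have "b^Suc k \<ge> 2" using assms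
    by (rule pge)
  hence e: "b^Suc k - 2 + digit_sum b (b^Suc k + 1) = b^Suc k"
    using ds_pow1[OF assms, of k] by linarith
  have r: "rev_num b (b^Suc k) = 1" by (rule rev_pow[OF assms])
  have t: "is_extra_term b (b^Suc k + 1) (b^Suc k - 2)"
    unfolding is_extra_term_def e r ..
  thus ?thesis unfolding wARH_def by auto
qed

theorem proposition11:
  fixes b :: nat
  assumes "b \<ge> 2"
  shows "infinite {N. wARH b N} \<and>
         infinite {A. \<exists>N. wARH b N \<and> is_extra_term b N A}"
proof
  have sm: "strict_mono (\<lambda>k. b^Suc k)" using assms
    by (intro strict_monoI) (simp add: power_strict_increasing)
  have i0: "inj (\<lambda>k. b^Suc k)" using strict_mono_imp_inj_on[OF sm] by simp
  have i1: "inj (\<lambda>k. b^Suc k + 1)"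
  proof (rule injI)
    fix x y assume "b^Suc x + 1 = b^Suc y + 1"
    hence "b^Suc x = b^Suc y" by (simp only: add_right_cancel)
    thus "x = y" by (rule injD[OF i0])
  qed
  have i2: "inj (\<lambda>k. b^Suc k - 2)"
  proof (rule injI)
    fix x y assume "b^Suc x - 2 = b^Suc y - 2"
    moreover have "b^Suc x \<ge> 2" "b^Suc y \<ge> 2" using assms
      using pge[OF assms] by auto
    ultimately have "b^Suc x = b^Suc y" by linarith
    thus "x = y" by (rule injD[OF i0])
  qed
  have "range (\<lambda>k. b^Suc k + 1) \<subseteq> {N. wARH b N}" using key[OF assms] by auto
  thus "infinite {N. wARH b N}" using finite_imageD[OF _ i1] infinite_UNIV_nat finite_subset by blast
  have "range (\<lambda>k. b^Suc k - 2) \<subseteq> {A. \<exists>N. wARH b N \<and> is_extra_term b N A}"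
    using key[OF assms] by blast
  thus "infinite {A. \<exists>N. wARH b N \<and> is_extra_term b N A}"
    using finite_imageD[OF _ i2] infinite_UNIV_nat finite_subset by blast
qed

end
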